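(* Let $A\in\mathbb{R}^{m_1\times d_1}$ and $B\in\mathbb{R}^{m_2\times d_2}$ be completely mixable matrices that have been permuted so that each has all row sums equal. Define the matrix $C=A\oplus B$ with $m_1m_2$ rows and $d_1d_2$ columns by $C_{m_2(i-1)+k,\,d_2(j-1)+l}=A_{ij}+B_{kl}$ for $1\leq i\leq m_1$, $1\leq j\leq d_1$, $1\leq k\leq m_2$, $1\leq l\leq d_2$ (i.e. the block matrix obtained by replacing each entry $A_{ij}$ of $A$ by the block $(A_{ij}+B_{kl})_{1\leq k\leq m_2,\,1\leq l\leq d_2}$). Then $C$ is completely mixable.
   Context: For $A\in\mathbb{R}^{m\times d}$ and $\Pi=(\pi_1,\dots,\pi_d)\in\mathfrak{S}(m)^d$ (where $\mathfrak{S}(m)$ is the symmetric group on $\{1,\dots,m\}$), $A^\Pi$ denotes the matrix with $A^\Pi_{i,j}=A_{\pi_j^{-1}(i),j}$. Define $\gamma(A)=\min_{\Pi}\max_{i}\sum_{j=1}^d A^\Pi_{i,j}$ and $\beta(A)=\max_{\Pi}\min_{i}\sum_{j=1}^d A^\Pi_{i,j}$. The matrix $A$ is called completely mixable if $\gamma(A)=\beta(A)$, i.e. if the entries within each column can be permuted so that all row sums are equal. *)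

theory Defs
  imports Complex_Main "HOL-Combinatorics.Permutations"
begin

text \<open>An m x d real matrix is represented as a function A :: nat => nat => real,
  with rows indexed by 0..<m and columns by 0..<d (0-based indices).
  A tuple Pi = (pi_1,...,pi_d) of permutations of the rows is a function
  nat => (nat => nat) with Pi j permuting {0..<m} for j < d; for
  definiteness (so that the set of tuples is finite) Pi j = id for j >= d.\<close>

definition perm_tuples :: "nat \<Rightarrow> nat \<Rightarrow> (nat \<Rightarrow> nat \<Rightarrow> nat) set" where
  "perm_tuples m d = {P. (\<forall>j<d. P j permutes {..<m}) \<and> (\<forall>j\<ge>d. P j = id)}"

definition permute_cols :: "(nat \<Rightarrow> nat \<Rightarrow> real) \<Rightarrow> (nat \<Rightarrow> nat \<Rightarrow> nat) \<Rightarrow> nat \<Rightarrow> nat \<Rightarrow> real" where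
  "permute_cols A P i j = A (inv (P j) i) j"

definition row_sum :: "nat \<Rightarrow> (nat \<Rightarrow> nat \<Rightarrow> real) \<Rightarrow> nat \<Rightarrow> real" where
  "row_sum d A i = (\<Sum>j<d. A i j)"

definition gamma :: "nat \<Rightarrow> nat \<Rightarrow> (nat \<Rightarrow> nat \<Rightarrow> real) \<Rightarrow> real" where
  "gamma m d A = Min ((\<lambda>P. Max ((\<lambda>i. row_sum d (permute_cols A P) i) ` {..<m})) ` perm_tuples m d)"

definition beta :: "nat \<Rightarrow> nat \<Rightarrow> (nat \<Rightarrow> nat \<Rightarrow> real) \<Rightarrow> real" where
  "beta m d A = Max ((\<lambda>P. Min ((\<lambda>i. row_sum d (permute_cols A P) i) ` {..<m})) ` perm_tuples m d)"

definition completely_mixable :: "nat \<Rightarrow> nat \<Rightarrow> (nat \<Rightarrow> nat \<Rightarrow> real) \<Rightarrow> bool" where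
  "completely_mixable m d A \<longleftrightarrow> gamma m d A = beta m d A"

definition block_oplus :: "nat \<Rightarrow> nat \<Rightarrow> (nat \<Rightarrow> nat \<Rightarrow> real) \<Rightarrow> (nat \<Rightarrow> nat \<Rightarrow> real) \<Rightarrow> nat \<Rightarrow> nat \<Rightarrow> real" where
  "block_oplus m2 d2 A B r c = A (r div m2) (c div d2) + B (r mod m2) (c mod d2)"

end

theory Submission
  imports Defs
begin

lemma finite_perm_tuples: "finite (perm_tuples m d)"
proof -
  let ?F = "(\<lambda>f j. if j < d then f j else id) :: (nat \<Rightarrow> nat \<Rightarrow> nat) \<Rightarrow> _"
  let ?S = "PiE {..<d} (\<lambda>_. {p. p permutes {..<m}})"
  have "perm_tuples m d \<subseteq> ?F ` ?S"
  proof
    fix P assume P: "P \<in> perm_tuples m d"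
    have h1: "\<forall>j<d. P j permutes {..<m}" and h2: "\<forall>j\<ge>d. P j = id"
      using P unfolding perm_tuples_def by blast+
    have "P = ?F (restrict P {..<d})"
    proof (rule ext)
      fix j show "P j = ?F (restrict P {..<d}) j"
        using h2 by (cases "j < d") simp_all
    qed
    moreover have "restrict P {..<d} \<in> ?S"
      using h1 by (simp add: PiE_iff)
    ultimately show "P \<in> ?F ` ?S" by (rule image_eqI)
  qed
  moreover have "finite ?S"
    by (intro finite_PiE) (simp_all add: finite_permutations)
  ultimately show ?thesis using finite_subset by blast
qed

lemma total_invariant:
  assumes "P \<in> perm_tuples m d"
  shows "(\<Sum>i<m. row_sum d (permute_cols A P) i) = (\<Sum>i<m. row_sum d A i)"
proof -
  have "(\<Sum>i<m. row_sum d (permute_cols A P) i) = (\<Sum>j<d. \<Sum>i<m. A (inv (P j) i) j)"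
    unfolding row_sum_def permute_cols_def by (rule sum.swap)
  also have "\<dots> = (\<Sum>j<d. \<Sum>i<m. A i j)"
  proof (rule sum.cong[OF refl])
    fix j assume "j \<in> {..<d}"
    hence "inv (P j) permutes {..<m}" using assms by (auto simp: perm_tuples_def intro: permutes_inv)
    hence b: "bij_betw (inv (P j)) {..<m} {..<m}" by (rule permutes_imp_bij)
    show "(\<Sum>i<m. A (inv (P j) i) j) = (\<Sum>i<m. A i j)"
      using sum.reindex_bij_betw[OF b, of "\<lambda>i. A i j"] by simp
  qed
  also have "\<dots> = (\<Sum>i<m. row_sum d A i)"
    unfolding row_sum_def by (rule sum.swap)
  finally show ?thesis .
qed

lemma cm_criterion:
  assumes m: "0 < m" and Q: "Q \<in> perm_tuples m d"
    and eq: "\<And>i. i < m \<Longrightarrow> row_sum d (permute_cols A Q) i = S"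
  shows "completely_mixable m d A"
proof -
  let ?f = "\<lambda>P i. row_sum d (permute_cols A P) i"
  have tot: "(\<Sum>i<m. ?f P i) = of_nat m * S" if "P \<in> perm_tuples m d" for P
  proof -
    have "(\<Sum>i<m. ?f P i) = (\<Sum>i<m. ?f Q i)"
      using total_invariant[OF that] total_invariant[OF Q] by simp
    also have "\<dots> = of_nat m * S" using eq by simp
    finally show ?thesis .
  qed
  have ne: "{..<m} \<noteq> {}" using m by auto
  have ex_ge: "\<exists>i<m. S \<le> ?f P i" if "P \<in> perm_tuples m d" for P
  proof (rule ccontr)
    assume "\<not> ?thesis"
    hence "\<And>i. i \<in> {..<m} \<Longrightarrow> ?f P i < S" by auto
    hence "(\<Sum>i<m. ?f P i) < (\<Sum>i<m. S)" using ne by (intro sum_strict_mono) auto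
    thus False using tot[OF that] by simp
  qed
  have ex_le: "\<exists>i<m. ?f P i \<le> S" if "P \<in> perm_tuples m d" for P
  proof (rule ccontr)
    assume "\<not> ?thesis"
    hence "\<And>i. i \<in> {..<m} \<Longrightarrow> S < ?f P i" by auto
    hence "(\<Sum>i<m. S) < (\<Sum>i<m. ?f P i)" using ne by (intro sum_strict_mono) auto
    thus False using tot[OF that] by simp
  qed
  have maxge: "S \<le> Max (?f P ` {..<m})" if PP: "P \<in> perm_tuples m d" for P
  proof -
    obtain i where i: "i < m" "S \<le> ?f P i" using ex_ge[OF PP] by blast
    have "?f P i \<le> Max (?f P ` {..<m})" by (rule Max_ge) (use i in auto)
    thus ?thesis using i by linarith
  qed
  have minle: "Min (?f P ` {..<m}) \<le> S" if PP: "P \<in> perm_tuples m d" for P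
  proof -
    obtain i where i: "i < m" "?f P i \<le> S" using ex_le[OF PP] by blast
    have "Min (?f P ` {..<m}) \<le> ?f P i" by (rule Min_le) (use i in auto)
    thus ?thesis using i by linarith
  qed
  have img0: "?f Q ` {..<m} = {S}" using eq ne by auto
  have g: "gamma m d A = S"
    unfolding gamma_def
  proof (rule Min_eqI)
    show "finite ((\<lambda>P. Max (?f P ` {..<m})) ` perm_tuples m d)"
      using finite_perm_tuples by blast
    show "S \<le> y" if yy: "y \<in> (\<lambda>P. Max (?f P ` {..<m})) ` perm_tuples m d" for y
    proof -
      obtain P where "P \<in> perm_tuples m d" "y = Max (?f P ` {..<m})" using yy by (rule imageE) simp
      thus ?thesis using maxge by simp
    qed
    have e: "Max (?f Q ` {..<m}) = S" using img0 by simp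
    show "S \<in> (\<lambda>P. Max (?f P ` {..<m})) ` perm_tuples m d"
      by (rule image_eqI[where x=Q]) (simp_all only: e Q)
  qed
  have b: "beta m d A = S"
    unfolding beta_def
  proof (rule Max_eqI)
    show "finite ((\<lambda>P. Min (?f P ` {..<m})) ` perm_tuples m d)"
      using finite_perm_tuples by blast
    show "y \<le> S" if yy: "y \<in> (\<lambda>P. Min (?f P ` {..<m})) ` perm_tuples m d" for y
    proof -
      obtain P where "P \<in> perm_tuples m d" "y = Min (?f P ` {..<m})" using yy by (rule imageE) simp
      thus ?thesis using minle by simp
    qed
    have e: "Min (?f Q ` {..<m}) = S" using img0 by simp
    show "S \<in> (\<lambda>P. Min (?f P ` {..<m})) ` perm_tuples m d"
      by (rule image_eqI[where x=Q]) (simp_all only: e Q)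
  qed
  show ?thesis unfolding completely_mixable_def using g b by simp
qed

lemma id_tuple: "(\<lambda>j. id) \<in> perm_tuples m d"
  unfolding perm_tuples_def by (simp add: permutes_id)

lemma sum_divmod:
  "(\<Sum>c<n * k. g (c div k) (c mod k)) = (\<Sum>j<n. \<Sum>l<k. g j l)" for k :: nat
proof -
  have "(\<Sum>c<n * k. g (c div k) (c mod k)) = (\<Sum>j<n. \<Sum>c\<in>{j*k..<j*k+k}. g (c div k) (c mod k))"
    by (rule sum.nat_group[symmetric])
  also have "\<dots> = (\<Sum>j<n. \<Sum>l<k. g j l)"
  proof (rule sum.cong[OF refl])
    fix j
    have "(\<Sum>c\<in>{j*k..<j*k+k}. g (c div k) (c mod k)) = (\<Sum>l\<in>{0..<k}. g ((l + j*k) div k) ((l+j*k) mod k))"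
      using sum.shift_bounds_nat_ivl[of "\<lambda>c. g (c div k) (c mod k)" 0 "j*k" k] by (simp add: add.commute)
    also have "\<dots> = (\<Sum>l<k. g j l)"
      by (rule sum.cong) auto
    finally show "(\<Sum>c\<in>{j*k..<j*k+k}. g (c div k) (c mod k)) = (\<Sum>l<k. g j l)" .
  qed
  finally show ?thesis .
qed

theorem proposition1:
  fixes A B :: "nat \<Rightarrow> nat \<Rightarrow> real" and m1 d1 m2 d2 :: nat
  assumes "0 < m1" "0 < d1" "0 < m2" "0 < d2"
    and "completely_mixable m1 d1 A" and "completely_mixable m2 d2 B"
    and "\<forall>i<m1. row_sum d1 A i = row_sum d1 A 0"
    and "\<forall>k<m2. row_sum d2 B k = row_sum d2 B 0"
  shows "completely_mixable (m1 * m2) (d1 * d2) (block_oplus m2 d2 A B)"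
proof (rule cm_criterion[where Q = "\<lambda>j. id"])
  show "0 < m1 * m2" using assms(1,3) by simp
  show "(\<lambda>j. id) \<in> perm_tuples (m1 * m2) (d1 * d2)"
    by (rule id_tuple)
  fix r assume r: "r < m1 * m2"
  have ri: "r div m2 < m1" using less_mult_imp_div_less[OF r] .
  have rk: "r mod m2 < m2" using assms(3) by simp
  have "row_sum (d1 * d2) (permute_cols (block_oplus m2 d2 A B) (\<lambda>j. id)) r
      = (\<Sum>c<d1 * d2. A (r div m2) (c div d2) + B (r mod m2) (c mod d2))"
    unfolding row_sum_def permute_cols_def block_oplus_def by (simp only: inv_id id_apply)
  also have "\<dots> = (\<Sum>j<d1. \<Sum>l<d2. A (r div m2) j + B (r mod m2) l)"
    using sum_divmod[of "\<lambda>j l. A (r div m2) j + B (r mod m2) l" d2 d1] by (simp only:)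
  also have "\<dots> = of_nat d2 * row_sum d1 A (r div m2) + of_nat d1 * row_sum d2 B (r mod m2)"
  proof -
    have "(\<Sum>j<d1. \<Sum>l<d2. A (r div m2) j + B (r mod m2) l)
        = (\<Sum>j<d1. of_nat d2 * A (r div m2) j + row_sum d2 B (r mod m2))"
      by (rule sum.cong[OF refl]) (simp add: sum.distrib row_sum_def)
    also have "\<dots> = of_nat d2 * row_sum d1 A (r div m2) + of_nat d1 * row_sum d2 B (r mod m2)"
      by (simp add: sum.distrib row_sum_def sum_distrib_left)
    finally show ?thesis .
  qed
  also have "\<dots> = of_nat d2 * row_sum d1 A 0 + of_nat d1 * row_sum d2 B 0"
  proof -
    have "row_sum d1 A (r div m2) = row_sum d1 A 0" using assms(7) ri by blast
    moreover have "row_sum d2 B (r mod m2) = row_sum d2 B 0" using assms(8) rk by blast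
    ultimately show ?thesis by (simp only:)
  qed
  finally show "row_sum (d1 * d2) (permute_cols (block_oplus m2 d2 A B) (\<lambda>j. id)) r
      = of_nat d2 * row_sum d1 A 0 + of_nat d1 * row_sum d2 B 0" .
qed

end
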